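(* Let $f_1,\dots,f_n:\mathbb{R}^d\to\mathbb{R}$ be convex with each $f_i$ being $L_i$-smooth, let $f = \frac{1}{n}\sum_i f_i$ and let $x^*$ be a minimizer of $f$. Let $\mathcal{C}_1,\dots,\mathcal{C}_n$ be independent randomized compression operators with $\mathcal{C}_i\in\mathbb{B}^d(\omega_i)$, and let $\beta_i\in(0, \frac{1}{\omega_i+1}]$ for each $i$. For points $x^k, h_1^k,\dots,h_n^k$ define $h_i^{k+1} = h_i^k + \beta_i\mathcal{C}_i(\nabla f_i(x^k) - h_i^k)$ and $\sigma_k^2 = \frac{1}{n}\sum_{i=1}^n\omega_i\|h_i^k - \nabla f_i(x^* )\|^2$ (and analogously $\sigma_{k+1}^2$ with $h_i^{k+1}$). Then \[ \mathbb{E}\,\sigma_{k+1}^2 \leq (1 - \min_i\beta_i)\sigma_k^2 + 2\max_i\{\beta_i\omega_iL_i\}\,D_f(x^k,x^* ), \] where the expectation is over the compressors.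
   Context: A (random) operator $\mathcal{C}$ belongs to $\mathbb{B}^d(\omega)$ if $\mathbb{E}[\mathcal{C}(x)] = x$ and $\mathbb{E}\|\mathcal{C}(x)-x\|^2\leq\omega\|x\|^2$ for all $x$. The Bregman divergence is $D_f(x,y) = f(x)-f(y)-\langle\nabla f(y),x-y\rangle$. A differentiable $g$ is $L$-smooth if $\|\nabla g(x)-\nabla g(y)\|\leq L\|x-y\|$ for all $x,y$. *)

theory Defs
  imports "HOL-Probability.Probability"
begin

text \<open>Unbiased compressor class B^d(omega): a random operator C given as a function of the
  sample point s of the probability space M.\<close>
definition unbiased_compressor :: "'s measure \<Rightarrow> real \<Rightarrow> ('s \<Rightarrow> 'a::euclidean_space \<Rightarrow> 'a) \<Rightarrow> bool" where
  "unbiased_compressor M \<omega> C \<longleftrightarrow>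
     (\<forall>x. integrable M (\<lambda>s. C s x) \<and> (\<integral>s. C s x \<partial>M) = x \<and>
          integrable M (\<lambda>s. (norm (C s x - x))\<^sup>2) \<and>
          (\<integral>s. (norm (C s x - x))\<^sup>2 \<partial>M) \<le> \<omega> * (norm x)\<^sup>2)"

definition bregman :: "('a::real_inner \<Rightarrow> real) \<Rightarrow> ('a \<Rightarrow> 'a) \<Rightarrow> 'a \<Rightarrow> 'a \<Rightarrow> real" where
  "bregman f gf x y = f x - f y - inner (gf y) (x - y)"

definition L_smooth :: "('a::real_inner \<Rightarrow> real) \<Rightarrow> ('a \<Rightarrow> 'a) \<Rightarrow> real \<Rightarrow> bool" where
  "L_smooth g gg L \<longleftrightarrow>
     (\<forall>x. (g has_derivative (\<lambda>h. inner (gg x) h)) (at x)) \<and>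
     (\<forall>x y. norm (gg x - gg y) \<le> L * norm (x - y))"

end

theory Submission imports Defs begin

lemma line_deriv:
  fixes g :: "'a::real_inner \<Rightarrow> real"
  assumes "\<And>z. (g has_derivative (\<lambda>h. inner (gg z) h)) (at z)"
  shows "((\<lambda>t. g (x + t *\<^sub>R d)) has_real_derivative inner (gg (x + t *\<^sub>R d)) d) (at t)"
proof -
  have l: "((\<lambda>t. x + t *\<^sub>R d) has_derivative (\<lambda>h. h *\<^sub>R d)) (at t)"
    by (auto intro!: derivative_eq_intros)
  have "((\<lambda>t. g (x + t *\<^sub>R d)) has_derivative (\<lambda>h. inner (gg (x + t *\<^sub>R d)) (h *\<^sub>R d))) (at t)"
    using diff_chain_at[OF l assms[of "x + t *\<^sub>R d"]] by (simp add: o_def)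
  then show ?thesis unfolding has_field_derivative_def
    by (rule has_derivative_eq_rhs) (auto simp: fun_eq_iff)
qed

lemma grad_ineq:
  fixes g :: "'a::real_inner \<Rightarrow> real"
  assumes c: "convex_on UNIV g" and d: "\<And>z. (g has_derivative (\<lambda>h. inner (gg z) h)) (at z)"
  shows "g x \<ge> g y + inner (gg y) (x - y)"
proof -
  let ?p = "\<lambda>t. g (y + t *\<^sub>R (x - y))"
  have cp: "convex_on UNIV ?p"
  proof (rule convex_onI)
    fix t a u :: real assume "0 < t" "t < 1"
    have "y + ((1 - t) * a + t * u) *\<^sub>R (x - y) = (1 - t) *\<^sub>R (y + a *\<^sub>R (x - y)) + t *\<^sub>R (y + u *\<^sub>R (x - y))"
      by (simp add: algebra_simps)
    then show "?p ((1 - t) *\<^sub>R a + t *\<^sub>R u) \<le> (1 - t) * ?p a + t * ?p u"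
      using c \<open>0 < t\<close> \<open>t < 1\<close> convex_onD[OF c, of t "y + a *\<^sub>R (x - y)" "y + u *\<^sub>R (x - y)"] by simp
  qed simp
  have "?p 1 - ?p 0 \<ge> inner (gg (y + 0 *\<^sub>R (x - y))) (x - y) * (1 - 0)"
    by (rule convex_on_imp_above_tangent[OF cp]) (use line_deriv[OF d, of y "x - y" 0] in auto)
  then show ?thesis by simp
qed

lemma descent:
  fixes g :: "'a::real_inner \<Rightarrow> real"
  assumes s: "L_smooth g gg L"
  shows "g y \<le> g x + inner (gg x) (y - x) + L / 2 * (norm (y - x))\<^sup>2"
proof -
  let ?d = "y - x"
  let ?h = "\<lambda>t. g (x + t *\<^sub>R ?d) - t * inner (gg x) ?d - L / 2 * t\<^sup>2 * (norm ?d)\<^sup>2"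
  have d: "\<And>z. (g has_derivative (\<lambda>h. inner (gg z) h)) (at z)" and lip: "\<And>a b. norm (gg a - gg b) \<le> L * norm (a - b)"
    using s unfolding L_smooth_def by auto
  have "?h 1 \<le> ?h 0"
  proof (rule DERIV_nonpos_imp_nonincreasing[of 0 1 ?h])
    fix t :: real assume t0: "0 \<le> t" and t1: "t \<le> 1"
    show "\<exists>y. DERIV ?h t :> y \<and> y \<le> 0"
    proof -
      have t: "0 \<le> t" using t0 .
      have D: "DERIV ?h t :> inner (gg (x + t *\<^sub>R ?d)) ?d - inner (gg x) ?d - L / 2 * (2 * t) * (norm ?d)\<^sup>2"
        by (auto intro!: derivative_eq_intros line_deriv[OF d])
      have "inner (gg (x + t *\<^sub>R ?d)) ?d - inner (gg x) ?d = inner (gg (x + t *\<^sub>R ?d) - gg x) ?d"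
        by (simp add: inner_diff_left)
      also have "\<dots> \<le> norm (gg (x + t *\<^sub>R ?d) - gg x) * norm ?d"
        by (rule norm_cauchy_schwarz)
      also have "\<dots> \<le> L * norm (t *\<^sub>R ?d) * norm ?d"
        using lip[of "x + t *\<^sub>R ?d" x] by (simp add: mult_right_mono)
      also have "\<dots> = L * t * (norm ?d)\<^sup>2" using t by (simp add: power2_eq_square)
      finally have le: "inner (gg (x + t *\<^sub>R ?d)) ?d - inner (gg x) ?d \<le> L * t * (norm ?d)\<^sup>2" .
      show ?thesis
        by (rule exI[of _ "inner (gg (x + t *\<^sub>R ?d)) ?d - inner (gg x) ?d - L / 2 * (2 * t) * (norm ?d)\<^sup>2"]) (use D le in simp)
    qed
  qed simp
  then show ?thesis by simp
qed

lemma cocoercive: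
  fixes g :: "'a::real_inner \<Rightarrow> real"
  assumes c: "convex_on UNIV g" and s: "L_smooth g gg L"
  shows "(norm (gg x - gg y))\<^sup>2 \<le> 2 * L * bregman g gg x y"
proof -
  have d: "\<And>z. (g has_derivative (\<lambda>h. inner (gg z) h)) (at z)" and lip: "\<And>a b. norm (gg a - gg b) \<le> L * norm (a - b)"
    using s unfolding L_smooth_def by auto
  have D0: "bregman g gg x y \<ge> 0" using grad_ineq[OF c d, where x=x and y=y] by (simp add: bregman_def)
  define G where "G = gg x - gg y"
  show ?thesis
  proof (cases "G = 0")
    case True
    show ?thesis
    proof (cases "x = y")
      case True then show ?thesis by (simp add: bregman_def)
    next
      case False
      have "0 \<le> L * norm (x - y)" using lip[of x y] norm_ge_zero[of "gg x - gg y"] by linarith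
      then have "L \<ge> 0" using False by (simp add: zero_le_mult_iff)
      then show ?thesis using D0 \<open>G = 0\<close> by (simp add: G_def)
    qed
  next
    case False
    then have "x \<noteq> y" by (auto simp: G_def)
    have "0 < norm G" using False by simp
    also have "norm G \<le> L * norm (x - y)" using lip[of x y] by (simp add: G_def)
    finally have "0 < L * norm (x - y)" .
    then have Lp: "L > 0" using \<open>x \<noteq> y\<close> by (simp add: zero_less_mult_iff)
    define w where "w = x - (1 / L) *\<^sub>R G"
    have g1: "g w \<ge> g y + inner (gg y) (w - y)" by (rule grad_ineq[OF c d])
    have g2: "g w \<le> g x + inner (gg x) (w - x) + L / 2 * (norm (w - x))\<^sup>2" by (rule descent[OF s])
    have e1: "inner (gg y) (w - y) = inner (gg y) (x - y) + inner (gg y) (w - x)"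
      by (simp add: inner_diff_right)
    have e2: "inner (gg x) (w - x) - inner (gg y) (w - x) = - (1 / L) * (norm G)\<^sup>2"
      by (simp add: w_def G_def inner_diff_left power2_norm_eq_inner algebra_simps)
    have e3: "L / 2 * (norm (w - x))\<^sup>2 = (1 / (2 * L)) * (norm G)\<^sup>2"
      using Lp by (simp add: w_def power2_eq_square field_simps)
    have "(1 / (2 * L)) * (norm G)\<^sup>2 \<le> bregman g gg x y"
    proof -
      have e4: "(1 / L) * (norm G)\<^sup>2 = 2 * ((1 / (2 * L)) * (norm G)\<^sup>2)" by simp
      show ?thesis using g1 g2 e1 e2 e3 e4 unfolding bregman_def by linarith
    qed
    then have "2 * L * ((1 / (2 * L)) * (norm G)\<^sup>2) \<le> 2 * L * bregman g gg x y"
      using Lp by (intro mult_left_mono) auto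
    then show ?thesis using Lp by (simp add: G_def)
  qed
qed

lemma comp_step:
  fixes C :: "'s \<Rightarrow> 'a::euclidean_space \<Rightarrow> 'a"
  assumes M: "prob_space M" and comp: "unbiased_compressor M \<omega> C"
    and b0: "0 < \<beta>" and b1: "\<beta> \<le> 1 / (\<omega> + 1)"
  shows "integrable M (\<lambda>s. (norm (h + \<beta> *\<^sub>R C s (G - h) - g))\<^sup>2) \<and>
    (\<integral>s. (norm (h + \<beta> *\<^sub>R C s (G - h) - g))\<^sup>2 \<partial>M) \<le> (1 - \<beta>) * (norm (h - g))\<^sup>2 + \<beta> * (norm (G - g))\<^sup>2"
proof -
  interpret prob_space M by (rule M)
  define D where "D = G - h"
  define a where "a = h - g"
  define c where "c = a + \<beta> *\<^sub>R D"
  define Y where "Y = (\<lambda>s. C s D - D)"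
  have iC: "integrable M (\<lambda>s. C s D)" and eC: "(\<integral>s. C s D \<partial>M) = D"
    and iY2: "integrable M (\<lambda>s. (norm (Y s))\<^sup>2)" and eY2: "(\<integral>s. (norm (Y s))\<^sup>2 \<partial>M) \<le> \<omega> * (norm D)\<^sup>2"
    using comp unfolding unbiased_compressor_def Y_def by auto
  have iY: "integrable M Y" unfolding Y_def using iC by auto
  have eY: "(\<integral>s. Y s \<partial>M) = 0" unfolding Y_def using iC eC by (simp add: prob_space)
  have pt: "(norm (h + \<beta> *\<^sub>R C s (G - h) - g))\<^sup>2 = (norm c)\<^sup>2 + 2 * \<beta> * inner c (Y s) + \<beta>\<^sup>2 * (norm (Y s))\<^sup>2" for s
  proof -
    have e: "h + \<beta> *\<^sub>R C s (G - h) - g = c + \<beta> *\<^sub>R Y s"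
      by (simp add: c_def a_def Y_def D_def algebra_simps)
    have "(norm (c + \<beta> *\<^sub>R Y s))\<^sup>2 = (norm c)\<^sup>2 + 2 * \<beta> * inner c (Y s) + \<beta>\<^sup>2 * (norm (Y s))\<^sup>2"
      by (simp only: power2_norm_eq_inner) (simp add: inner_add_left inner_add_right power2_eq_square algebra_simps inner_commute)
    then show ?thesis by (simp only: e)
  qed
  have i1: "integrable M (\<lambda>s. (norm c)\<^sup>2 + 2 * \<beta> * inner c (Y s) + \<beta>\<^sup>2 * (norm (Y s))\<^sup>2)"
    using iY iY2 by auto
  have "(\<integral>s. (norm c)\<^sup>2 + 2 * \<beta> * inner c (Y s) + \<beta>\<^sup>2 * (norm (Y s))\<^sup>2 \<partial>M)
      = (norm c)\<^sup>2 + 2 * \<beta> * inner c (\<integral>s. Y s \<partial>M) + \<beta>\<^sup>2 * (\<integral>s. (norm (Y s))\<^sup>2 \<partial>M)"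
    using iY iY2 by (simp add: prob_space)
  also have "\<dots> \<le> (norm c)\<^sup>2 + \<beta>\<^sup>2 * (\<omega> * (norm D)\<^sup>2)"
    using eY eY2 by (simp add: mult_left_mono)
  also have "\<dots> \<le> (1 - \<beta>) * (norm (h - g))\<^sup>2 + \<beta> * (norm (G - g))\<^sup>2"
  proof -
    have "0 < 1 / (\<omega> + 1)" using b0 b1 by linarith
    then have w1: "\<omega> + 1 > 0" by (simp add: zero_less_divide_iff)
    then have bw: "\<beta> * (\<omega> + 1) \<le> 1" using b1 by (simp add: field_simps)
    have "\<beta>\<^sup>2 * (\<omega> + 1) * (norm D)\<^sup>2 \<le> \<beta> * (norm D)\<^sup>2"
    proof -
      have "\<beta>\<^sup>2 * (\<omega> + 1) * (norm D)\<^sup>2 = \<beta> * (\<beta> * (\<omega> + 1)) * (norm D)\<^sup>2" by (simp add: power2_eq_square)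
      also have "\<dots> \<le> \<beta> * 1 * (norm D)\<^sup>2" using bw b0 by (intro mult_right_mono mult_left_mono) auto
      finally show ?thesis by simp
    qed
    moreover have "(norm c)\<^sup>2 = (norm a)\<^sup>2 + 2 * \<beta> * inner a D + \<beta>\<^sup>2 * (norm D)\<^sup>2"
      unfolding c_def by (simp only: power2_norm_eq_inner) (simp add: inner_add_left inner_add_right power2_eq_square algebra_simps inner_commute)
    moreover have "(norm (G - g))\<^sup>2 = (norm a)\<^sup>2 + 2 * inner a D + (norm D)\<^sup>2"
    proof -
      have "G - g = a + D" by (simp add: a_def D_def)
      then show ?thesis by (simp only: power2_norm_eq_inner) (simp add: inner_add_left inner_add_right power2_eq_square algebra_simps inner_commute)
    qed
    moreover have "h - g = a" by (simp add: a_def)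
    ultimately show ?thesis by (simp add: algebra_simps)
  qed
  finally show ?thesis using i1 pt by simp
qed

theorem lemma4:
  fixes M :: "'s measure"
    and n :: nat
    and f :: "nat \<Rightarrow> 'a::euclidean_space \<Rightarrow> real"
    and gradf :: "nat \<Rightarrow> 'a \<Rightarrow> 'a"
    and L \<omega> \<beta> :: "nat \<Rightarrow> real"
    and C :: "nat \<Rightarrow> 's \<Rightarrow> 'a \<Rightarrow> 'a"
    and xstar xk :: 'a
    and hk :: "nat \<Rightarrow> 'a"
  assumes M: "prob_space M"
    and n: "n \<ge> 1"
    and conv: "\<And>i. i < n \<Longrightarrow> convex_on UNIV (f i)"
    and smooth: "\<And>i. i < n \<Longrightarrow> L_smooth (f i) (gradf i) (L i)"
    and minim: "\<And>y. (1 / real n) * (\<Sum>i<n. f i xstar) \<le> (1 / real n) * (\<Sum>i<n. f i y)"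
    and comp: "\<And>i. i < n \<Longrightarrow> unbiased_compressor M (\<omega> i) (C i)"
    and indep: "prob_space.indep_vars M (\<lambda>_. Pi\<^sub>M UNIV (\<lambda>_. borel)) C {..<n}"
    and beta: "\<And>i. i < n \<Longrightarrow> 0 < \<beta> i \<and> \<beta> i \<le> 1 / (\<omega> i + 1)"
  shows "(\<integral>s. (1 / real n) * (\<Sum>i<n. \<omega> i *
             (norm (hk i + \<beta> i *\<^sub>R C i s (gradf i xk - hk i) - gradf i xstar))\<^sup>2) \<partial>M)
         \<le> (1 - Min (\<beta> ` {..<n})) * ((1 / real n) * (\<Sum>i<n. \<omega> i * (norm (hk i - gradf i xstar))\<^sup>2))
           + 2 * Max ((\<lambda>i. \<beta> i * \<omega> i * L i) ` {..<n})
               * bregman (\<lambda>x. (1 / real n) * (\<Sum>i<n. f i x))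
                         (\<lambda>x. (1 / real n) *\<^sub>R (\<Sum>i<n. gradf i x)) xk xstar"
proof -
  interpret prob_space M by (rule M)
  define X where "X = (\<lambda>i s. (norm (hk i + \<beta> i *\<^sub>R C i s (gradf i xk - hk i) - gradf i xstar))\<^sup>2)"
  define A where "A = (\<lambda>i. (norm (hk i - gradf i xstar))\<^sup>2)"
  define B where "B = (\<lambda>i. (norm (gradf i xk - gradf i xstar))\<^sup>2)"
  define Dd where "Dd = (\<lambda>i. bregman (f i) (gradf i) xk xstar)"
  define mb where "mb = Min (\<beta> ` {..<n})"
  define Mx where "Mx = Max ((\<lambda>i. \<beta> i * \<omega> i * L i) ` {..<n})"
  have step: "integrable M (X i) \<and> (\<integral>s. X i s \<partial>M) \<le> (1 - \<beta> i) * A i + \<beta> i * B i" if "i < n" for i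
    using comp_step[OF M comp[OF that], of "\<beta> i" "hk i" "gradf i xk" "gradf i xstar"] beta[OF that]
    unfolding X_def A_def B_def by auto
  have wpos: "\<omega> i \<ge> 0" if "i < n" for i
  proof -
    obtain b :: 'a where b: "b \<in> Basis" using nonempty_Basis by blast
    have le: "(\<integral>s. (norm (C i s b - b))\<^sup>2 \<partial>M) \<le> \<omega> i * (norm b)\<^sup>2"
      using comp[OF that] unfolding unbiased_compressor_def by auto
    have nn: "0 \<le> (\<integral>s. (norm (C i s b - b))\<^sup>2 \<partial>M)" by (rule integral_nonneg_AE) auto
    have nb: "norm b = 1" using b by simp
    have "(\<integral>s. (norm (C i s b - b))\<^sup>2 \<partial>M) \<le> \<omega> i" using le nb by simp
    then show ?thesis using nn by linarith
  qed
  have Dpos: "Dd i \<ge> 0" if "i < n" for i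
    using cocoercive[OF conv[OF that] smooth[OF that], of xk xstar] grad_ineq[OF conv[OF that], where gg="gradf i" and x=xk and y=xstar]
      smooth[OF that] unfolding Dd_def L_smooth_def bregman_def by auto
  have BD: "B i \<le> 2 * L i * Dd i" if "i < n" for i
    using cocoercive[OF conv[OF that] smooth[OF that], of xk xstar] unfolding B_def Dd_def by simp
  have trm: "\<omega> i * ((1 - \<beta> i) * A i + \<beta> i * B i) \<le> (1 - mb) * (\<omega> i * A i) + 2 * Mx * Dd i" if "i < n" for i
  proof -
    have "mb \<le> \<beta> i" unfolding mb_def using that by (intro Min_le) auto
    moreover have "0 \<le> \<omega> i * A i" using wpos[OF that] by (simp add: A_def)
    ultimately have t1: "(1 - \<beta> i) * (\<omega> i * A i) \<le> (1 - mb) * (\<omega> i * A i)"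
      by (intro mult_right_mono) auto
    have "\<beta> i * \<omega> i * L i \<le> Mx" unfolding Mx_def using that by (intro Max_ge) auto
    then have t2: "2 * (\<beta> i * \<omega> i * L i) * Dd i \<le> 2 * Mx * Dd i"
      using Dpos[OF that] by (intro mult_right_mono) auto
    have "\<omega> i * \<beta> i * B i \<le> \<omega> i * \<beta> i * (2 * L i * Dd i)"
      using BD[OF that] wpos[OF that] beta[OF that] by (intro mult_left_mono) auto
    then show ?thesis using t1 t2 by (simp add: algebra_simps)
  qed
  have "(\<integral>s. (1 / real n) * (\<Sum>i<n. \<omega> i * X i s) \<partial>M) = (1 / real n) * (\<Sum>i<n. \<omega> i * (\<integral>s. X i s \<partial>M))"
    using step by (simp add: integral_sum)
  also have "\<dots> \<le> (1 / real n) * (\<Sum>i<n. (1 - mb) * (\<omega> i * A i) + 2 * Mx * Dd i)"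
  proof -
    have "\<omega> i * (\<integral>s. X i s \<partial>M) \<le> (1 - mb) * (\<omega> i * A i) + 2 * Mx * Dd i" if "i < n" for i
      using mult_left_mono[OF conjunct2[OF step[OF that]] wpos[OF that]] trm[OF that] by linarith
    then show ?thesis by (intro mult_left_mono sum_mono) auto
  qed
  also have "\<dots> = (1 - mb) * ((1 / real n) * (\<Sum>i<n. \<omega> i * A i)) + 2 * Mx * ((1 / real n) * (\<Sum>i<n. Dd i))"
    by (simp only: sum.distrib sum_distrib_left[symmetric]) (use n in \<open>simp add: field_simps\<close>)
  also have "(1 / real n) * (\<Sum>i<n. Dd i) = bregman (\<lambda>x. (1 / real n) * (\<Sum>i<n. f i x))
                         (\<lambda>x. (1 / real n) *\<^sub>R (\<Sum>i<n. gradf i x)) xk xstar"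
    unfolding Dd_def bregman_def
    by (simp add: inner_sum_left sum_subtractf sum_distrib_left algebra_simps sum.distrib)
  finally show ?thesis unfolding X_def A_def mb_def Mx_def .
qed

end
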